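(* Let $(b,c)$ be a connected weighted graph over $X$. The following are equivalent: (i) $(b,c)$ is canonically compactifiable; (ii) $\sup_{x,y\in X}\varrho(x,y)<\infty$; (iii) $\sup_{x,y\in X}r(x,y)<\infty$. If $c\equiv0$, these are moreover equivalent to: (iv) $\sup_{x,y\in X}\sigma(x,y)<\infty$ for every pseudometric $\sigma$ on $X$ that is intrinsic with respect to some measure $m$ on $X$ with $m(X)<\infty$.
   Context: Let $X$ be a countably infinite set. A weighted graph $(b,c)$ over $X$ consists of a symmetric $b:X\times X\to[0,\infty)$ with $b(x,x)=0$ and $\sum_{y}b(x,y)<\infty$ for all $x$, and $c:X\to[0,\infty)$. A path is a finite sequence of pairwise distinct vertices with $b(x_{i-1},x_i)>0$; connected means any two distinct vertices are joined by a path. For $f:X\to\mathbb C$ let $\widetilde Q(f)=\frac12\sum_{x,y}b(x,y)|f(x)-f(y)|^2+\sum_x c(x)|f(x)|^2\in[0,\infty]$ and $\widetilde D=\{f:\widetilde Q(f)<\infty\}$. The graph is called canonically compactifiable if $\widetilde D\subseteq\ell^\infty(X)$, i.e. every function of finite energy is bounded. Define $\varrho(x,y)=\sup\{|f(x)-f(y)|:f\in\widetilde D,\ \widetilde Q(f)\le1\}$, and $r(x,x)=0$, $r(x,y)=\sup\{1/\widetilde Q(g):g\in\widetilde D,\ |g(x)-g(y)|=1\}$ for $x\neq y$. A measure on $X$ is $m:X\to[0,\infty)$ with $m(A)=\sum_{x\in A}m(x)$; a pseudometric $\sigma$ is intrinsic with respect to $m$ if $\frac12\sum_y b(x,y)\sigma(x,y)^2\le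 m(x)$ for all $x$. *)

theory Defs
  imports "HOL-Analysis.Analysis" "HOL-Library.Extended_Nonnegative_Real"
begin

definition weighted_graph :: "('x \<Rightarrow> 'x \<Rightarrow> real) \<Rightarrow> ('x \<Rightarrow> real) \<Rightarrow> bool" where
  "weighted_graph b c \<longleftrightarrow>
     (\<forall>x y. b x y = b y x) \<and> (\<forall>x y. 0 \<le> b x y) \<and> (\<forall>x. b x x = 0) \<and>
     (\<forall>x. (\<lambda>y. b x y) summable_on UNIV) \<and> (\<forall>x. 0 \<le> c x)"

definition is_path :: "('x \<Rightarrow> 'x \<Rightarrow> real) \<Rightarrow> 'x list \<Rightarrow> bool" where
  "is_path b p \<longleftrightarrow> p \<noteq> [] \<and> distinct p \<and>
     (\<forall>i. Suc i < length p \<longrightarrow> b (p ! i) (p ! Suc i) > 0)"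

definition graph_connected :: "('x \<Rightarrow> 'x \<Rightarrow> real) \<Rightarrow> bool" where
  "graph_connected b \<longleftrightarrow>
     (\<forall>x y. x \<noteq> y \<longrightarrow> (\<exists>p. is_path b p \<and> hd p = x \<and> last p = y))"

definition Qt :: "('x \<Rightarrow> 'x \<Rightarrow> real) \<Rightarrow> ('x \<Rightarrow> real) \<Rightarrow> ('x \<Rightarrow> complex) \<Rightarrow> ennreal" where
  "Qt b c f = (1/2) * (\<Sum>\<^sub>\<infinity>(x,y)\<in>UNIV. ennreal (b x y * (cmod (f x - f y))\<^sup>2))
              + (\<Sum>\<^sub>\<infinity>x\<in>UNIV. ennreal (c x * (cmod (f x))\<^sup>2))"

definition Dt :: "('x \<Rightarrow> 'x \<Rightarrow> real) \<Rightarrow> ('x \<Rightarrow> real) \<Rightarrow> ('x \<Rightarrow> complex) set" where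
  "Dt b c = {f. Qt b c f < \<infinity>}"

definition canonically_compactifiable :: "('x \<Rightarrow> 'x \<Rightarrow> real) \<Rightarrow> ('x \<Rightarrow> real) \<Rightarrow> bool" where
  "canonically_compactifiable b c \<longleftrightarrow> (\<forall>f \<in> Dt b c. bounded (range f))"

definition rho :: "('x \<Rightarrow> 'x \<Rightarrow> real) \<Rightarrow> ('x \<Rightarrow> real) \<Rightarrow> 'x \<Rightarrow> 'x \<Rightarrow> ennreal" where
  "rho b c x y = (SUP f \<in> {f \<in> Dt b c. Qt b c f \<le> 1}. ennreal (cmod (f x - f y)))"

definition res :: "('x \<Rightarrow> 'x \<Rightarrow> real) \<Rightarrow> ('x \<Rightarrow> real) \<Rightarrow> 'x \<Rightarrow> 'x \<Rightarrow> ennreal" where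
  "res b c x y = (if x = y then 0
     else (SUP g \<in> {g \<in> Dt b c. cmod (g x - g y) = 1}. 1 / Qt b c g))"

definition pseudometric :: "('x \<Rightarrow> 'x \<Rightarrow> real) \<Rightarrow> bool" where
  "pseudometric \<sigma> \<longleftrightarrow> (\<forall>x y. 0 \<le> \<sigma> x y) \<and> (\<forall>x. \<sigma> x x = 0) \<and>
     (\<forall>x y. \<sigma> x y = \<sigma> y x) \<and> (\<forall>x y z. \<sigma> x z \<le> \<sigma> x y + \<sigma> y z)"

definition is_measure :: "('x \<Rightarrow> real) \<Rightarrow> bool" where
  "is_measure m \<longleftrightarrow> (\<forall>x. 0 \<le> m x)"

definition total_mass :: "('x \<Rightarrow> real) \<Rightarrow> ennreal" where
  "total_mass m = (\<Sum>\<^sub>\<infinity>x\<in>UNIV. ennreal (m x))"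

definition intrinsic :: "('x \<Rightarrow> 'x \<Rightarrow> real) \<Rightarrow> ('x \<Rightarrow> 'x \<Rightarrow> real) \<Rightarrow> ('x \<Rightarrow> real) \<Rightarrow> bool" where
  "intrinsic b \<sigma> m \<longleftrightarrow>
     (\<forall>x. (1/2) * (\<Sum>\<^sub>\<infinity>y\<in>UNIV. ennreal (b x y * (\<sigma> x y)\<^sup>2)) \<le> ennreal (m x))"

end

theory Submission
  imports Defs
begin


lemma summ_enn[simp]: "(f::'a \<Rightarrow> ennreal) summable_on A"
  by (rule nonneg_summable_on_complete) simp

lemma infsum_enn_SUP:
  "infsum (f::'a \<Rightarrow> ennreal) A = (SUP F\<in>{F. finite F \<and> F \<subseteq> A}. sum f F)"
  by (rule nonneg_infsum_complete) simp

lemma sum_le_infsum_enn: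
  assumes "finite F" "F \<subseteq> A"
  shows "sum (f::'a \<Rightarrow> ennreal) F \<le> infsum f A"
  unfolding infsum_enn_SUP using assms by (intro SUP_upper) auto

lemma term_le_infsum_enn:
  assumes "x \<in> A"
  shows "(f::'a \<Rightarrow> ennreal) x \<le> infsum f A"
  using sum_le_infsum_enn[of "{x}" A f] assms by simp

lemma infsum_enn_cmult:
  "infsum (\<lambda>p. (r::ennreal) * f p) A = r * infsum f A"
  unfolding infsum_enn_SUP SUP_mult_left_ennreal sum_distrib_left ..

lemma infsum_enn_mono:
  assumes "\<And>p. p \<in> A \<Longrightarrow> (f::'a \<Rightarrow> ennreal) p \<le> g p"
  shows "infsum f A \<le> infsum g A"
  by (rule infsum_mono) (simp_all add: assms)

lemma infsum_suminf_le:
  assumes "\<And>p. p \<in> A \<Longrightarrow> (f::'a \<Rightarrow> ennreal) p \<le> (\<Sum>n. g n p)"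
  shows "infsum f A \<le> (\<Sum>n. infsum (g n) A)"
  unfolding infsum_enn_SUP[of f]
proof (rule SUP_least)
  fix F assume F: "F \<in> {F. finite F \<and> F \<subseteq> A}"
  have "sum f F \<le> sum (\<lambda>p. \<Sum>n. g n p) F"
    using F assms by (intro sum_mono) auto
  also have "\<dots> = (\<Sum>n. sum (\<lambda>p. g n p) F)"
    by (rule suminf_sum[symmetric]) simp
  also have "\<dots> \<le> (\<Sum>n. infsum (g n) A)"
    using F by (intro suminf_le sum_le_infsum_enn) auto
  finally show "sum f F \<le> (\<Sum>n. infsum (g n) A)" .
qed

lemma infsum_Sigma_le_enn:
  "infsum (f::'a\<times>'b \<Rightarrow> ennreal) (A \<times> B) \<le> infsum (\<lambda>x. infsum (\<lambda>y. f (x,y)) B) A"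
  unfolding infsum_enn_SUP[of f]
proof (rule SUP_least)
  fix F assume F: "F \<in> {F. finite F \<and> F \<subseteq> A \<times> B}"
  have "sum f F \<le> sum f (fst ` F \<times> snd ` F)"
    using F by (intro sum_mono2) force+
  also have "\<dots> = (\<Sum>x\<in>fst ` F. \<Sum>y\<in>snd ` F. f (x,y))"
    by (simp add: sum.cartesian_product)
  also have "\<dots> \<le> (\<Sum>x\<in>fst ` F. infsum (\<lambda>y. f (x,y)) B)"
    using F by (intro sum_mono sum_le_infsum_enn) force+
  also have "\<dots> \<le> infsum (\<lambda>x. infsum (\<lambda>y. f (x,y)) B) A"
    using F by (intro sum_le_infsum_enn) force+
  finally show "sum f F \<le> infsum (\<lambda>x. infsum (\<lambda>y. f (x,y)) B) A" .
qed

lemma infsum_Sigma_ge_enn: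
  "infsum (\<lambda>x. infsum (\<lambda>y. f (x,y)) B) A \<le> infsum (f::'a\<times>'b \<Rightarrow> ennreal) (A \<times> B)"
  unfolding infsum_enn_SUP[of "\<lambda>x. infsum (\<lambda>y. f (x,y)) B"]
proof (rule SUP_least)
  fix F assume F: "F \<in> {F. finite F \<and> F \<subseteq> A}"
  have eq: "(\<Sum>x\<in>F. infsum (\<lambda>y. f (x,y)) B) = infsum f (F \<times> B)" if "finite F" for F
    using that
  proof (induction F rule: finite_induct)
    case empty then show ?case by simp
  next
    case (insert a F)
    have "infsum f (insert a F \<times> B) = infsum f ({a} \<times> B \<union> F \<times> B)" by (rule arg_cong[where f="infsum f"]) auto
    also have "\<dots> = infsum f ({a} \<times> B) + infsum f (F \<times> B)"
      using insert by (intro infsum_Un_disjoint) auto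
    also have "infsum f ({a} \<times> B) = infsum (\<lambda>y. f (a,y)) B"
    proof -
      have "{a} \<times> B = (\<lambda>y. (a,y)) ` B" by auto
      then show ?thesis by (simp add: infsum_reindex inj_on_def comp_def)
    qed
    finally show ?case using insert by simp
  qed
  have "(\<Sum>x\<in>F. infsum (\<lambda>y. f (x,y)) B) = infsum f (F \<times> B)" using F eq by auto
  also have "\<dots> \<le> infsum f (A \<times> B)"
    using F by (intro infsum_mono_neutral) auto
  finally show "(\<Sum>x\<in>F. infsum (\<lambda>y. f (x,y)) B) \<le> infsum f (A \<times> B)" .
qed



definition Et :: "('x \<Rightarrow> 'x \<Rightarrow> real) \<Rightarrow> ('x \<Rightarrow> complex) \<Rightarrow> ennreal" where
  "Et b f = (\<Sum>\<^sub>\<infinity>(x,y)\<in>UNIV. ennreal (b x y * (cmod (f x - f y))\<^sup>2))"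
definition Ct :: "('x \<Rightarrow> real) \<Rightarrow> ('x \<Rightarrow> complex) \<Rightarrow> ennreal" where
  "Ct c f = (\<Sum>\<^sub>\<infinity>x\<in>UNIV. ennreal (c x * (cmod (f x))\<^sup>2))"

lemma Qt_split: "Qt b c f = 1/2 * Et b f + Ct c f"
  by (simp add: Qt_def Et_def Ct_def)

lemma wgD: assumes "weighted_graph b c"
  shows "b x y = b y x" "0 \<le> b x y" "b x x = 0" "0 \<le> c x"
  using assms unfolding weighted_graph_def by auto

lemma Qt_scale:
  assumes wg: "weighted_graph b c"
  shows "Qt b c (\<lambda>x. of_real t * f x) = ennreal (t\<^sup>2) * Qt b c f"
proof -
  have n: "cmod (of_real t * f x - of_real t * f y) = \<bar>t\<bar> * cmod (f x - f y)" for x y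
    by (simp add: right_diff_distrib[symmetric] norm_mult)
  have e1: "ennreal (b x y * (cmod (of_real t * f x - of_real t * f y))\<^sup>2)
     = ennreal (t\<^sup>2) * ennreal (b x y * (cmod (f x - f y))\<^sup>2)" for x y
    using wgD(2)[OF wg, of x y]
    by (simp add: n ennreal_mult[symmetric] power_mult_distrib algebra_simps)
  have e2: "ennreal (c x * (cmod (of_real t * f x))\<^sup>2)
     = ennreal (t\<^sup>2) * ennreal (c x * (cmod (f x))\<^sup>2)" for x
    using wgD(4)[OF wg, of x]
    by (simp add: norm_mult ennreal_mult[symmetric] power_mult_distrib algebra_simps)
  have "Et b (\<lambda>x. of_real t * f x) = ennreal (t\<^sup>2) * Et b f"
    unfolding Et_def using e1
    by (simp add: split_def infsum_enn_cmult[symmetric])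
  moreover have "Ct c (\<lambda>x. of_real t * f x) = ennreal (t\<^sup>2) * Ct c f"
    unfolding Ct_def using e2
    by (simp add: infsum_enn_cmult[symmetric])
  ultimately show ?thesis unfolding Qt_split by (simp add: algebra_simps)
qed

lemma Qt_mono:
  assumes "\<And>x y. b x y * (cmod (g x - g y))\<^sup>2 \<le> b x y * (cmod (f x - f y))\<^sup>2"
    and "\<And>x. c x * (cmod (g x))\<^sup>2 \<le> c x * (cmod (f x))\<^sup>2"
  shows "Qt b c g \<le> Qt b c f"
proof -
  have "Et b g \<le> Et b f" unfolding Et_def
    by (rule infsum_enn_mono) (auto intro: ennreal_leI assms)
  moreover have "Ct c g \<le> Ct c f" unfolding Ct_def
    by (rule infsum_enn_mono) (auto intro: ennreal_leI assms)
  ultimately show ?thesis unfolding Qt_split by (intro add_mono mult_left_mono) auto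
qed

lemma edge_bound:
  assumes wg: "weighted_graph b c" and Q: "Qt b c f \<le> ennreal e" and e: "0 \<le> e" and pq: "p \<noteq> q"
  shows "b p q * (cmod (f p - f q))\<^sup>2 \<le> e"
proof -
  define T where "T = ennreal (b p q * (cmod (f p - f q))\<^sup>2)"
  have T2: "ennreal (b q p * (cmod (f q - f p))\<^sup>2) = T"
    unfolding T_def using wgD(1)[OF wg, of p q] by (simp add: norm_minus_commute)
  have eqT: "(\<Sum>z\<in>{(p,q),(q,p)}. (\<lambda>(x,y). ennreal (b x y * (cmod (f x - f y))\<^sup>2)) z) = T + T"
    using pq T2 by (simp add: T_def)
  have leT: "(\<Sum>z\<in>{(p,q),(q,p)}. (\<lambda>(x,y). ennreal (b x y * (cmod (f x - f y))\<^sup>2)) z) \<le> Et b f"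
    unfolding Et_def by (rule sum_le_infsum_enn) auto
  have "T + T \<le> Et b f" using eqT leT by simp
  hence "1/2 * (T + T) \<le> 1/2 * Et b f" by (rule mult_left_mono) simp
  moreover have "1/2 * (T + T) = T"
    by (simp add: mult_2[symmetric] mult.assoc[symmetric] ennreal_divide_times)
  moreover have "1/2 * Et b f \<le> Qt b c f" unfolding Qt_split by simp
  ultimately have "T \<le> ennreal e" using Q by (metis order_trans)
  thus ?thesis unfolding T_def using e by (simp add: ennreal_le_iff)
qed

lemma vertex_bound:
  assumes wg: "weighted_graph b c" and Q: "Qt b c f \<le> ennreal e" and e: "0 \<le> e"
  shows "c p * (cmod (f p))\<^sup>2 \<le> e"
proof -
  have "ennreal (c p * (cmod (f p))\<^sup>2) \<le> Ct c f"
    unfolding Ct_def by (rule term_le_infsum_enn[where f="\<lambda>x. ennreal (c x * (cmod (f x))\<^sup>2)"]) simp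
  also have "\<dots> \<le> Qt b c f" unfolding Qt_split by simp
  finally show ?thesis using Q e by (meson ennreal_le_iff order_trans)
qed

fun pK :: "('x \<Rightarrow> 'x \<Rightarrow> real) \<Rightarrow> 'x list \<Rightarrow> real" where
  "pK b (x # y # xs) = 1 / sqrt (b x y) + pK b (y # xs)"
| "pK b _ = 0"

lemma path_bound:
  assumes wg: "weighted_graph b c" and Q: "Qt b c f \<le> ennreal e" and e: "0 \<le> e"
  shows "p \<noteq> [] \<Longrightarrow> (\<forall>i. Suc i < length p \<longrightarrow> b (p ! i) (p ! Suc i) > 0)
     \<Longrightarrow> cmod (f (hd p) - f (last p)) \<le> sqrt e * pK b p"
proof (induction p rule: induct_list012)
  case (3 x y xs)
  have bxy: "b x y > 0" using "3.prems"(2) by (metis length_Cons nth_Cons_0 nth_Cons_Suc zero_less_Suc Suc_less_eq)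
  have cond: "\<forall>i. Suc i < length (y # xs) \<longrightarrow> 0 < b ((y # xs) ! i) ((y # xs) ! Suc i)"
      using "3.prems"(2) by (metis Suc_less_eq length_Cons nth_Cons_Suc)
  have ih: "cmod (f y - f (last (y # xs))) \<le> sqrt e * pK b (y # xs)"
    using "3"(2)[OF _ cond] by simp
  have xy: "x \<noteq> y" using bxy wgD(3)[OF wg] by auto
  have ed: "b x y * (cmod (f x - f y))\<^sup>2 \<le> e" by (rule edge_bound[OF wg Q e xy])
  have "(cmod (f x - f y))\<^sup>2 \<le> e / b x y" using ed bxy by (simp add: field_simps)
  hence "cmod (f x - f y) \<le> sqrt (e / b x y)" by (simp add: real_le_rsqrt)
  also have "\<dots> = sqrt e * (1 / sqrt (b x y))" by (simp add: real_sqrt_divide)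
  finally have d1: "cmod (f x - f y) \<le> sqrt e * (1 / sqrt (b x y))" .
  have "cmod (f x - f (last (x # y # xs))) \<le> cmod (f x - f y) + cmod (f y - f (last (y # xs)))"
    using norm_triangle_ineq[of "f x - f y" "f y - f (last (y # xs))"] by simp
  also have "\<dots> \<le> sqrt e * (1 / sqrt (b x y)) + sqrt e * pK b (y # xs)" using d1 ih by linarith
  finally show ?case by (simp add: distrib_left)
qed auto



lemma point_bound:
  assumes wg: "weighted_graph b c" and con: "graph_connected b"
  shows "\<exists>K. \<forall>f e. 0 \<le> e \<longrightarrow> Qt b c f \<le> ennreal e \<longrightarrow> cmod (f z0 - f w) \<le> sqrt e * K"
proof (cases "z0 = w")
  case True then show ?thesis by (intro exI[of _ 0]) auto
next
  case False
  then obtain p where p: "is_path b p" "hd p = z0" "last p = w"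
    using con unfolding graph_connected_def by blast
  show ?thesis
  proof (intro exI[of _ "pK b p"] allI impI)
    fix f e assume "0 \<le> (e::real)" and Qe: "Qt b c f \<le> ennreal e"
    note this = Qe \<open>0 \<le> e\<close>
    from path_bound[OF wg this, of p] p show "cmod (f z0 - f w) \<le> sqrt e * pK b p"
      unfolding is_path_def by auto
  qed
qed

lemma bdd_from_diff:
  assumes "\<And>x y. cmod (f x - f y) \<le> B"
  shows "bounded (range f)"
  unfolding bounded_iff
proof (intro exI[of _ "cmod (f undefined) + B"] ballI)
  fix z assume "z \<in> range f"
  then obtain x where z: "z = f x" by auto
  have "cmod (f x) \<le> cmod (f undefined) + cmod (f x - f undefined)"
    using norm_triangle_ineq[of "f undefined" "f x - f undefined"] by simp
  then show "cmod z \<le> cmod (f undefined) + B" using assms[of x undefined] z by simp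
qed

lemma DtI: "Qt b c f = ennreal q \<Longrightarrow> f \<in> Dt b c"
  unfolding Dt_def by auto

lemma fin_enn: assumes "(x::ennreal) < top" obtains r where "x = ennreal r" "0 \<le> r"
proof -
  from assms obtain r where "0 \<le> r" "x = ennreal r" unfolding less_top_ennreal by blast
  then show ?thesis using that by blast
qed

lemma DtE: assumes "f \<in> Dt b c" obtains q where "Qt b c f = ennreal q" "0 \<le> q"
proof -
  have "Qt b c f < top" using assms by (simp add: Dt_def)
  then obtain q where "Qt b c f = ennreal q" "0 \<le> q" by (rule fin_enn)
  then show ?thesis using that by blast
qed

lemma rho_le: "f \<in> Dt b c \<Longrightarrow> Qt b c f \<le> 1 \<Longrightarrow> ennreal (cmod (f x - f y)) \<le> rho b c x y"
  unfolding rho_def by (rule SUP_upper) auto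

lemma cmod_scale: "cmod (of_real t * f x - of_real t * f y) = \<bar>t\<bar> * cmod (f x - f y)"
  by (simp add: right_diff_distrib[symmetric] norm_mult)

lemma sup2_bound:
  assumes "(SUP x. SUP y. F x y) < (\<infinity>::ennreal)"
  obtains M where "0 \<le> M" "\<And>x y. F x y \<le> ennreal M"
proof -
  have "(SUP x. SUP y. F x y) < top" using assms by simp
  then obtain M where M: "(SUP x. SUP y. F x y) = ennreal M" "0 \<le> M"
    by (rule fin_enn)
  have "F x y \<le> ennreal M" for x y
  proof -
    have "F x y \<le> (SUP y. F x y)" by (rule SUP_upper) simp
    also have "\<dots> \<le> (SUP x. SUP y. F x y)" by (rule SUP_upper) simp
    finally show ?thesis using M(1) by simp
  qed
  then show ?thesis using M(2) that by blast
qed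

lemma P1:
  assumes wg: "weighted_graph b c" and S: "(SUP x. SUP y. rho b c x y) < \<infinity>"
  shows "canonically_compactifiable b c"
  unfolding canonically_compactifiable_def
proof
  fix f assume f: "f \<in> Dt b c"
  obtain M where M: "0 \<le> M" "\<And>x y. rho b c x y \<le> ennreal M" using sup2_bound[OF S] by blast
  obtain q where q: "Qt b c f = ennreal q" "0 \<le> q" using DtE[OF f] by blast
  define t where "t = 1 / sqrt (q + 1)"
  have t: "t > 0" using q by (simp add: t_def)
  have "t\<^sup>2 = 1 / (q + 1)" using q by (simp add: t_def power_divide)
  hence "t\<^sup>2 * q = q / (q + 1)" by simp
  hence t2: "t\<^sup>2 * q \<le> 1" using q by simp
  define g where "g = (\<lambda>x. of_real t * f x)"
  have Qg: "Qt b c g = ennreal (t\<^sup>2 * q)"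
    unfolding g_def Qt_scale[OF wg] q using q by (simp add: ennreal_mult)
  have "\<And>x y. cmod (f x - f y) \<le> M / t"
  proof -
    fix x y
    have "ennreal (cmod (g x - g y)) \<le> ennreal M"
      using order_trans[OF rho_le[OF DtI[OF Qg], of x y] M(2)[of x y]] t2 Qg by simp
    hence "t * cmod (f x - f y) \<le> M" using M t by (simp add: g_def cmod_scale ennreal_le_iff)
    thus "cmod (f x - f y) \<le> M / t" using t by (simp add: field_simps)
  qed
  then show "bounded (range f)" by (rule bdd_from_diff)
qed

lemma P4:
  assumes wg: "weighted_graph b c" and S: "(SUP x. SUP y. res b c x y) < \<infinity>"
  shows "canonically_compactifiable b c"
  unfolding canonically_compactifiable_def
proof
  fix f assume f: "f \<in> Dt b c"
  obtain R where R: "0 \<le> R" "\<And>x y. res b c x y \<le> ennreal R" using sup2_bound[OF S] by blast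
  obtain q where q: "Qt b c f = ennreal q" "0 \<le> q" using DtE[OF f] by blast
  have "\<And>x y. cmod (f x - f y) \<le> sqrt (R * q)"
  proof -
    fix x y
    define d where "d = cmod (f x - f y)"
    show "cmod (f x - f y) \<le> sqrt (R * q)"
    proof (cases "d = 0")
      case True then show ?thesis using R q by (simp add: d_def)
    next
      case False
      hence d: "d > 0" by (simp add: d_def)
      hence xy: "x \<noteq> y" by (auto simp: d_def)
      define g where "g = (\<lambda>z. of_real (1/d) * f z)"
      have Qg: "Qt b c g = ennreal ((1/d)\<^sup>2 * q)"
        unfolding g_def Qt_scale[OF wg] q using q by (simp add: ennreal_mult)
      have "cmod (g x - g y) = \<bar>1/d\<bar> * d" unfolding g_def cmod_scale d_def ..
      hence g1: "cmod (g x - g y) = 1" using d by simp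
      have "1 / Qt b c g \<le> res b c x y"
        unfolding res_def using xy g1 DtI[OF Qg] by (auto intro!: SUP_upper)
      hence le: "1 / ennreal ((1/d)\<^sup>2 * q) \<le> ennreal R" using order_trans[OF _ R(2)[of x y]] Qg by simp
      have qpos: "q > 0"
      proof (rule ccontr)
        assume "\<not> q > 0" hence "q = 0" using q by simp
        with le show False by (simp add: top_unique)
      qed
      have "1 / ennreal ((1/d)\<^sup>2 * q) = ennreal (1 / ((1/d)\<^sup>2 * q))"
        using divide_ennreal[of 1 "(1/d)\<^sup>2 * q"] qpos d by simp
      with le have "1 / ((1/d)\<^sup>2 * q) \<le> R" using R by (simp add: ennreal_le_iff)
      hence "d\<^sup>2 \<le> R * q" using qpos d by (simp add: field_simps power_divide)
      hence "d \<le> sqrt (R * q)" by (simp add: real_le_rsqrt)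
      thus ?thesis by (simp add: d_def)
    qed
  qed
  then show "bounded (range f)" by (rule bdd_from_diff)
qed

lemma P3:
  assumes wg: "weighted_graph b c" and S: "(SUP x. SUP y. rho b c x y) < \<infinity>"
  shows "(SUP x. SUP y. res b c x y) < \<infinity>"
proof -
  obtain M where M: "0 \<le> M" "\<And>x y. rho b c x y \<le> ennreal M" using sup2_bound[OF S] by blast
  have "res b c x y \<le> ennreal (M\<^sup>2)" for x y
  proof (cases "x = y")
    case True then show ?thesis by (simp add: res_def)
  next
    case False
    show ?thesis unfolding res_def using False
    proof (simp, intro SUP_least, safe)
      fix g assume g: "g \<in> Dt b c" and g1: "cmod (g x - g y) = 1"
      obtain q where q: "Qt b c g = ennreal q" "0 \<le> q" using DtE[OF g] by blast
      have qpos: "q > 0"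
      proof (rule ccontr)
        assume "\<not> q > 0" hence q0: "q = 0" using q by simp
        define f where "f = (\<lambda>z. of_real (M+1) * g z)"
        have Qf: "Qt b c f = ennreal 0"
          unfolding f_def Qt_scale[OF wg] q q0 by simp
        have "ennreal (cmod (f x - f y)) \<le> ennreal M"
          using order_trans[OF rho_le[OF DtI[OF Qf], of x y] M(2)[of x y]] Qf by simp
        hence "cmod (f x - f y) \<le> M" using M by (simp add: ennreal_le_iff)
        moreover have "cmod (f x - f y) = \<bar>M+1\<bar> * 1" unfolding f_def cmod_scale g1 ..
        ultimately show False using M by simp
      qed
      define s where "s = 1 / sqrt q"
      define f where "f = (\<lambda>z. of_real s * g z)"
      have Qf: "Qt b c f = ennreal 1"
        unfolding f_def Qt_scale[OF wg] q using qpos by (simp add: s_def ennreal_mult[symmetric] power_divide)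
      have "ennreal (cmod (f x - f y)) \<le> ennreal M"
        using order_trans[OF rho_le[OF DtI[OF Qf], of x y] M(2)[of x y]] Qf by simp
      hence "cmod (f x - f y) \<le> M" using M by (simp add: ennreal_le_iff)
      moreover have "cmod (f x - f y) = \<bar>s\<bar> * 1" unfolding f_def cmod_scale g1 ..
      ultimately have "s \<le> M" using qpos by (simp add: s_def)
      hence "s\<^sup>2 \<le> M\<^sup>2" using qpos by (intro power_mono) (auto simp: s_def)
      hence "1 / q \<le> M\<^sup>2" using qpos by (simp add: s_def power_divide)
      moreover have "1 / Qt b c g = ennreal (1 / q)" using q qpos divide_ennreal[of 1 q] by simp
      ultimately show "1 / Qt b c g \<le> ennreal (M\<^sup>2)" by (simp add: ennreal_leI)
    qed
  qed
  hence "(SUP x. SUP y. res b c x y) \<le> ennreal (M\<^sup>2)" by (simp add: SUP_le_iff)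
  thus ?thesis unfolding infinity_ennreal_def using ennreal_less_top[of "M\<^sup>2"] by (rule le_less_trans)
qed



lemma Ct_zero: "Ct (\<lambda>_. 0) f = 0"
  unfolding Ct_def by simp

lemma UNIV_pairs: "(UNIV :: ('a \<times> 'b) set) = UNIV \<times> UNIV" by simp

lemma P5:
  assumes wg: "weighted_graph b c" and c0: "c = (\<lambda>_. 0)" and CC: "canonically_compactifiable b c"
    and ps: "pseudometric \<sigma>" and mm: "is_measure m" and tm: "total_mass m < \<infinity>"
    and intr: "intrinsic b \<sigma> m"
  shows "\<exists>C. \<forall>x y. \<sigma> x y \<le> C"
proof -
  define z0 where "z0 = (undefined :: 'a)"
  define f where "f = (\<lambda>x. complex_of_real (\<sigma> z0 x))"
  have sp: "\<And>x y. 0 \<le> \<sigma> x y" "\<And>x. \<sigma> x x = 0" "\<And>x y. \<sigma> x y = \<sigma> y x"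
    "\<And>x y z. \<sigma> x z \<le> \<sigma> x y + \<sigma> y z" using ps unfolding pseudometric_def by auto
  have dif: "\<bar>\<sigma> z0 x - \<sigma> z0 y\<bar> \<le> \<sigma> x y" for x y
    using sp(4)[of z0 x y] sp(4)[of z0 y x] sp(3)[of x y] by (simp add: abs_le_iff)
  have "Et b f \<le> (\<Sum>\<^sub>\<infinity>(x,y)\<in>UNIV. ennreal (b x y * (\<sigma> x y)\<^sup>2))"
    unfolding Et_def
  proof (rule infsum_enn_mono, clarsimp)
    fix x y
    have "(cmod (f x - f y))\<^sup>2 = (\<bar>\<sigma> z0 x - \<sigma> z0 y\<bar>)\<^sup>2"
      by (simp add: f_def flip: of_real_diff)
    also have "\<dots> \<le> (\<sigma> x y)\<^sup>2" using dif[of x y] by (intro power_mono) auto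
    finally show "ennreal (b x y * (cmod (f x - f y))\<^sup>2) \<le> ennreal (b x y * (\<sigma> x y)\<^sup>2)"
      using wgD(2)[OF wg, of x y] by (intro ennreal_leI mult_left_mono) auto
  qed
  also have "\<dots> \<le> (\<Sum>\<^sub>\<infinity>x\<in>UNIV. \<Sum>\<^sub>\<infinity>y\<in>UNIV. ennreal (b x y * (\<sigma> x y)\<^sup>2))"
    using infsum_Sigma_le_enn[of "\<lambda>(x,y). ennreal (b x y * (\<sigma> x y)\<^sup>2)" UNIV UNIV]
    by (simp add: UNIV_pairs[symmetric])
  finally have E: "1/2 * Et b f \<le> (\<Sum>\<^sub>\<infinity>x\<in>UNIV. 1/2 * (\<Sum>\<^sub>\<infinity>y\<in>UNIV. ennreal (b x y * (\<sigma> x y)\<^sup>2)))"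
    by (simp add: infsum_enn_cmult mult_left_mono)
  also have "\<dots> \<le> (\<Sum>\<^sub>\<infinity>x\<in>UNIV. ennreal (m x))"
    using intr unfolding intrinsic_def by (intro infsum_enn_mono) auto
  finally have "Qt b c f < \<infinity>" using tm unfolding Qt_split c0 Ct_zero total_mass_def by simp
  hence "f \<in> Dt b c" unfolding Dt_def by simp
  with CC obtain B where B: "\<And>z. z \<in> range f \<Longrightarrow> cmod z \<le> B"
    unfolding canonically_compactifiable_def bounded_iff by blast
  have "\<sigma> z0 x \<le> B" for x using B[of "f x"] sp(1)[of z0 x] by (simp add: f_def)
  hence "\<sigma> x y \<le> 2 * B" for x y using sp(4)[of x y z0] sp(3)[of x z0] by (smt (verit))
  thus ?thesis by blast
qed

lemma P6:
  assumes wg: "weighted_graph b c" and c0: "c = (\<lambda>_. 0)"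
    and iv: "\<forall>\<sigma> m. pseudometric \<sigma> \<and> is_measure m \<and> total_mass m < \<infinity> \<and> intrinsic b \<sigma> m
                 \<longrightarrow> (\<exists>C. \<forall>x y. \<sigma> x y \<le> C)"
  shows "canonically_compactifiable b c"
  unfolding canonically_compactifiable_def
proof
  fix f assume f: "f \<in> Dt b c"
  define \<sigma> where "\<sigma> = (\<lambda>x y. cmod (f x - f y))"
  define I where "I = (\<lambda>x. \<Sum>\<^sub>\<infinity>y\<in>UNIV. ennreal (b x y * (\<sigma> x y)\<^sup>2))"
  define m where "m = (\<lambda>x. enn2real (1/2 * I x))"
  have "(\<Sum>\<^sub>\<infinity>x\<in>UNIV. I x) \<le> Et b f"
    using infsum_Sigma_ge_enn[of "\<lambda>(x,y). ennreal (b x y * (\<sigma> x y)\<^sup>2)" UNIV UNIV]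
    unfolding I_def Et_def \<sigma>_def by (simp add: UNIV_pairs[symmetric])
  hence "1/2 * (\<Sum>\<^sub>\<infinity>x\<in>UNIV. I x) \<le> 1/2 * Et b f" by (rule mult_left_mono) simp
  also have "\<dots> = Qt b c f" by (simp add: Qt_split c0 Ct_zero)
  also have "\<dots> < \<infinity>" using f by (simp add: Dt_def)
  finally have sI: "1/2 * (\<Sum>\<^sub>\<infinity>x\<in>UNIV. I x) < \<infinity>" .
  have Ifin: "1/2 * I x < \<infinity>" for x
  proof -
    have "1/2 * I x \<le> 1/2 * (\<Sum>\<^sub>\<infinity>x\<in>UNIV. I x)"
      by (intro mult_left_mono term_le_infsum_enn) auto
    thus ?thesis using sI by simp
  qed
  have mI: "ennreal (m x) = 1/2 * I x" for x
    unfolding m_def using Ifin[of x] by simp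
  have ps: "pseudometric \<sigma>" unfolding pseudometric_def \<sigma>_def
  proof (intro conjI allI)
    fix x y z
    show "cmod (f x - f z) \<le> cmod (f x - f y) + cmod (f y - f z)"
      using norm_triangle_ineq[of "f x - f y" "f y - f z"] by simp
  qed (auto simp: norm_minus_commute)
  have "is_measure m" unfolding is_measure_def m_def by simp
  moreover have "total_mass m < \<infinity>"
    unfolding total_mass_def mI using sI by (simp add: infsum_enn_cmult)
  moreover have "intrinsic b \<sigma> m"
    unfolding intrinsic_def mI I_def by simp
  ultimately obtain C where C: "\<And>x y. \<sigma> x y \<le> C" using iv ps by blast
  show "bounded (range f)" by (rule bdd_from_diff[of f C]) (use C in \<open>simp add: \<sigma>_def\<close>)
qed



lemma sq_sup:
  assumes a: "0 \<le> a" and D: "\<And>t. (\<forall>n. \<bar>d n\<bar> \<le> t) \<Longrightarrow> \<bar>D\<bar> \<le> (t::real)"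
  shows "ennreal (a * D\<^sup>2) \<le> (\<Sum>n. ennreal (a * (d n)\<^sup>2))"
proof (cases "(\<Sum>n. ennreal (a * (d n)\<^sup>2)) = top")
  case True then show ?thesis by simp
next
  case False
  define T where "T = enn2real (\<Sum>n. ennreal (a * (d n)\<^sup>2))"
  have T: "(\<Sum>n. ennreal (a * (d n)\<^sup>2)) = ennreal T" "0 \<le> T"
    using False by (simp_all add: T_def less_top[symmetric])
  show ?thesis
  proof (cases "a = 0")
    case True then show ?thesis by simp
  next
    case False
    hence apos: "a > 0" using a by simp
    have tn: "a * (d n)\<^sup>2 \<le> T" for n
    proof -
      have "ennreal (a * (d n)\<^sup>2) \<le> (\<Sum>n. ennreal (a * (d n)\<^sup>2))"
        using sum_le_suminf[of "\<lambda>n. ennreal (a * (d n)\<^sup>2)" "{n}"] by simp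
      thus ?thesis using T by (simp add: ennreal_le_iff)
    qed
    have "\<bar>d n\<bar> \<le> sqrt (T / a)" for n
    proof -
      have "(d n)\<^sup>2 \<le> T / a" using tn[of n] apos by (simp add: field_simps)
      thus ?thesis by (simp add: real_le_rsqrt)
    qed
    hence "\<bar>D\<bar> \<le> sqrt (T / a)" using D by blast
    hence "D\<^sup>2 \<le> T / a"
      by (metis abs_ge_zero power2_abs real_sqrt_le_iff real_sqrt_abs sqrt_le_D)
    hence "a * D\<^sup>2 \<le> T" using apos by (simp add: field_simps)
    thus ?thesis using T by (simp add: ennreal_leI)
  qed
qed

lemma Qt_sup_le:
  assumes wg: "weighted_graph b c" and nn: "\<And>n w. 0 \<le> g n w"
    and bd: "\<And>w. bdd_above (range (\<lambda>n. g n w))"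
  shows "Qt b c (\<lambda>w. complex_of_real (SUP n. g n w)) \<le> (\<Sum>n. Qt b c (\<lambda>w. complex_of_real (g n w)))"
proof -
  define G where "G = (\<lambda>w. SUP n. g n w)"
  have Gx: "G x = (SUP n. g n x)" for x by (simp add: G_def)
  have up: "g n w \<le> G w" for n w unfolding G_def by (rule cSUP_upper[OF _ bd]) simp
  have Gnn: "0 \<le> G w" for w using nn[of 0 w] up[of 0 w] by simp
  have diff: "\<bar>G x - G y\<bar> \<le> t" if "\<forall>n. \<bar>g n x - g n y\<bar> \<le> t" for x y t
  proof -
    have "G x \<le> G y + t" unfolding Gx[of x]
    proof (rule cSUP_least)
      fix n show "g n x \<le> G y + t" using that up[of n y] by (smt (verit))
    qed simp
    moreover have "G y \<le> G x + t" unfolding Gx[of y]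
    proof (rule cSUP_least)
      fix n show "g n y \<le> G x + t" using that up[of n x] by (smt (verit))
    qed simp
    ultimately show ?thesis by linarith
  qed
  have vert: "\<bar>G x\<bar> \<le> t" if "\<forall>n. \<bar>g n x\<bar> \<le> t" for x t
  proof -
    have "G x \<le> t" unfolding Gx[of x]
    proof (rule cSUP_least)
      fix n show "g n x \<le> t" using that by (smt (verit))
    qed simp
    thus ?thesis using Gnn[of x] by simp
  qed
  have cm: "cmod (complex_of_real u - complex_of_real v) = \<bar>u - v\<bar>" for u v
    by (simp flip: of_real_diff)
  have E: "Et b (\<lambda>w. complex_of_real (G w)) \<le> (\<Sum>n. Et b (\<lambda>w. complex_of_real (g n w)))"
    unfolding Et_def
  proof (rule infsum_suminf_le, clarsimp simp: cm)
    fix x y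
    show "ennreal (b x y * (G x - G y)\<^sup>2) \<le> (\<Sum>n. ennreal (b x y * (g n x - g n y)\<^sup>2))"
      by (rule sq_sup[OF wgD(2)[OF wg]]) (rule diff)
  qed
  have C: "Ct c (\<lambda>w. complex_of_real (G w)) \<le> (\<Sum>n. Ct c (\<lambda>w. complex_of_real (g n w)))"
    unfolding Ct_def
  proof (rule infsum_suminf_le, clarsimp)
    fix x
    show "ennreal (c x * (G x)\<^sup>2) \<le> (\<Sum>n. ennreal (c x * (g n x)\<^sup>2))"
      by (rule sq_sup[OF wgD(4)[OF wg]]) (rule vert)
  qed
  have "Qt b c (\<lambda>w. complex_of_real (G w)) \<le> 1/2 * (\<Sum>n. Et b (\<lambda>w. complex_of_real (g n w)))
      + (\<Sum>n. Ct c (\<lambda>w. complex_of_real (g n w)))"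
    unfolding Qt_split using E C by (intro add_mono mult_left_mono) auto
  also have "\<dots> = (\<Sum>n. Qt b c (\<lambda>w. complex_of_real (g n w)))"
    unfolding Qt_split ennreal_suminf_cmult[symmetric]
    by (rule suminf_add) (auto intro: summableI)
  finally show ?thesis unfolding G_def .
qed



lemma P2:
  assumes wg: "weighted_graph b c" and con: "graph_connected b"
    and CC: "canonically_compactifiable b c"
  shows "(SUP x. SUP y. rho b c x y) < \<infinity>"
proof (rule ccontr)
  assume "\<not> (SUP x. SUP y. rho b c x y) < \<infinity>"
  hence top: "(SUP x. SUP y. rho b c x y) = top" by (metis infinity_ennreal_def top.not_eq_extremum)
  have ex: "\<exists>f x y. f \<in> Dt b c \<and> Qt b c f \<le> 1 \<and> 8^n < cmod (f x - f y)" for n :: nat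
  proof -
    have "ennreal (8^n) < (SUP x. SUP y. rho b c x y)" by (subst top) simp
    then obtain x where "ennreal (8^n) < (SUP y. rho b c x y)" by (auto simp: less_SUP_iff)
    then obtain y where "ennreal (8^n) < rho b c x y" by (auto simp: less_SUP_iff)
    then obtain f where "f \<in> Dt b c" "Qt b c f \<le> 1" "ennreal (8^n) < ennreal (cmod (f x - f y))"
      unfolding rho_def by (auto simp: less_SUP_iff)
    then show ?thesis by (auto simp: ennreal_less_iff)
  qed
  obtain Fn Xn Yn where FXY: "\<And>n. Fn n \<in> Dt b c \<and> Qt b c (Fn n) \<le> 1 \<and> 8^n < cmod (Fn n (Xn n) - Fn n (Yn n))"
    using ex by metis
  define z0 where "z0 = (if c = (\<lambda>_. 0) then undefined else (SOME z. c z \<noteq> 0))"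
  define s where "s = (\<lambda>n. if c = (\<lambda>_. 0) then Fn n z0 else 0)"
  define h where "h = (\<lambda>n w. cmod (Fn n w - s n))"
  have hnn: "0 \<le> h n w" for n w by (simp add: h_def)
  have cm: "cmod (complex_of_real u - complex_of_real v) = \<bar>u - v\<bar>" for u v
    by (simp flip: of_real_diff)
  have QH: "Qt b c (\<lambda>w. complex_of_real (h n w)) \<le> ennreal 1" for n
  proof -
    have "Qt b c (\<lambda>w. complex_of_real (h n w)) \<le> Qt b c (Fn n)"
    proof (rule Qt_mono)
      fix x y
      have "\<bar>h n x - h n y\<bar> \<le> cmod (Fn n x - Fn n y)"
        unfolding h_def using norm_triangle_ineq3[of "Fn n x - s n" "Fn n y - s n"] by simp
      hence "(cmod (complex_of_real (h n x) - complex_of_real (h n y)))\<^sup>2 \<le> (cmod (Fn n x - Fn n y))\<^sup>2"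
        unfolding cm by (intro power_mono) auto
      thus "b x y * (cmod (complex_of_real (h n x) - complex_of_real (h n y)))\<^sup>2
          \<le> b x y * (cmod (Fn n x - Fn n y))\<^sup>2"
        using wgD(2)[OF wg] by (intro mult_left_mono) auto
    next
      fix x
      show "c x * (cmod (complex_of_real (h n x)))\<^sup>2 \<le> c x * (cmod (Fn n x))\<^sup>2"
      proof (cases "c = (\<lambda>_. 0)")
        case True then show ?thesis by simp
      next
        case False then show ?thesis by (simp add: h_def s_def)
      qed
    qed
    also have "\<dots> \<le> ennreal 1" using FXY[of n] by simp
    finally show ?thesis .
  qed
  define A where "A = (if c = (\<lambda>_. 0) then 0 else sqrt (1 / c z0))"
  have hz0: "h n z0 \<le> A" for n
  proof (cases "c = (\<lambda>_. 0)")
    case True then show ?thesis by (simp add: h_def s_def A_def)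
  next
    case False
    then obtain z where "c z \<noteq> 0" by auto
    hence cz: "c z0 \<noteq> 0" unfolding z0_def using False someI[of "\<lambda>z. c z \<noteq> 0" z] by simp
    hence cpos: "c z0 > 0" using wgD(4)[OF wg, of z0] by simp
    have "Qt b c (Fn n) \<le> ennreal 1" using FXY[of n] by simp
    from vertex_bound[OF wg this] have "c z0 * (cmod (Fn n z0))\<^sup>2 \<le> 1" by simp
    hence "(cmod (Fn n z0))\<^sup>2 \<le> 1 / c z0" using cpos by (simp add: field_simps)
    hence "cmod (Fn n z0) \<le> sqrt (1 / c z0)" by (simp add: real_le_rsqrt)
    thus ?thesis using False by (simp add: h_def s_def A_def)
  qed
  have "\<forall>w. \<exists>K. \<forall>f e. 0 \<le> e \<longrightarrow> Qt b c f \<le> ennreal e \<longrightarrow> cmod (f z0 - f w) \<le> sqrt e * K"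
    using point_bound[OF wg con] by blast
  then obtain K where K: "\<And>w f e. 0 \<le> e \<Longrightarrow> Qt b c f \<le> ennreal e \<Longrightarrow> cmod (f z0 - f w) \<le> sqrt e * K w"
    by metis
  have hb: "h n w \<le> A + K w" for n w
  proof -
    have "cmod (complex_of_real (h n z0) - complex_of_real (h n w)) \<le> sqrt 1 * K w"
      by (rule K[OF _ QH]) simp
    hence "\<bar>h n z0 - h n w\<bar> \<le> K w" unfolding cm by simp
    thus ?thesis using hz0[of n] by linarith
  qed
  define g where "g = (\<lambda>n w. (1/2)^n * h n w)"
  have gnn: "0 \<le> g n w" for n w using hnn by (simp add: g_def)
  have gb: "g n w \<le> A + K w" for n w
  proof -
    have "(1/2::real)^n \<le> 1" by (simp add: power_le_one)
    hence "g n w \<le> h n w" unfolding g_def using hnn[of n w] by (simp add: mult_left_le_one_le)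
    thus ?thesis using hb[of n w] by linarith
  qed
  have bd: "bdd_above (range (\<lambda>n. g n w))" for w
    using gb by (intro bdd_aboveI2) auto
  define G where "G = (\<lambda>w. SUP n. g n w)"
  have Qg: "Qt b c (\<lambda>w. complex_of_real (g n w)) \<le> ennreal ((1/4)^n)" for n
  proof -
    have "Qt b c (\<lambda>w. complex_of_real (g n w))
        = Qt b c (\<lambda>w. complex_of_real ((1/2)^n) * complex_of_real (h n w))"
      by (simp add: g_def)
    also have "\<dots> = ennreal (((1/2)^n)\<^sup>2) * Qt b c (\<lambda>w. complex_of_real (h n w))"
      by (rule Qt_scale[OF wg])
    also have "\<dots> \<le> ennreal (((1/2)^n)\<^sup>2) * ennreal 1"
      by (rule mult_left_mono[OF QH]) simp
    also have "\<dots> = ennreal ((1/4)^n)"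
      by (simp add: power_mult_distrib[symmetric] power2_eq_square flip: power_mult_distrib)
    finally show ?thesis .
  qed
  have "Qt b c (\<lambda>w. complex_of_real (G w)) \<le> (\<Sum>n. Qt b c (\<lambda>w. complex_of_real (g n w)))"
    unfolding G_def by (rule Qt_sup_le[OF wg gnn bd])
  also have "\<dots> \<le> (\<Sum>n. ennreal ((1/4)^n))"
    by (rule suminf_le[OF Qg]) (auto intro: summableI)
  also have "\<dots> < top"
  proof -
    have "(\<Sum>n. ennreal ((1/4::real)^n)) \<noteq> top"
      by (rule ennreal_suminf_neq_top) (auto intro: summable_geometric)
    thus ?thesis using top.not_eq_extremum by blast
  qed
  finally have "(\<lambda>w. complex_of_real (G w)) \<in> Dt b c" unfolding Dt_def by simp
  with CC have "bounded (range (\<lambda>w. complex_of_real (G w)))"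
    unfolding canonically_compactifiable_def by blast
  then obtain B where B: "\<And>w. cmod (complex_of_real (G w)) \<le> B"
    unfolding bounded_iff by blast
  define n where "n = nat \<lceil>2 * B\<rceil> + 1"
  have nB: "2 * B < real n" unfolding n_def by linarith
  define W where "W = (if h n (Xn n) \<ge> h n (Yn n) then Xn n else Yn n)"
  have "cmod (Fn n (Xn n) - Fn n (Yn n)) \<le> h n (Xn n) + h n (Yn n)"
    unfolding h_def using norm_triangle_ineq4[of "Fn n (Xn n) - s n" "Fn n (Yn n) - s n"] by simp
  hence "8^n < 2 * h n W" using FXY[of n] unfolding W_def by auto
  hence "(1/2)^n * 8^n < (1/2)^n * (2 * h n W)" by simp
  hence "4^n < 2 * g n W" unfolding g_def
    by (simp add: power_mult_distrib[symmetric] algebra_simps)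
  moreover have "g n W \<le> G W" unfolding G_def by (rule cSUP_upper[OF _ bd]) simp
  moreover have "real n \<le> 4^n"
  proof -
    have "n < 2^n" by (rule less_exp)
    also have "(2::nat)^n \<le> 4^n" by (rule power_mono) auto
    finally show ?thesis by (metis less_imp_le of_nat_le_iff of_nat_numeral of_nat_power)
  qed
  moreover have "G W \<le> B" using B[of W] by simp
  ultimately show False using nB by linarith
qed


theorem mainTheorem7:
  fixes b :: "'x \<Rightarrow> 'x \<Rightarrow> real" and c :: "'x \<Rightarrow> real"
  assumes "countable (UNIV :: 'x set)" and "infinite (UNIV :: 'x set)"
    and "weighted_graph b c" and "graph_connected b"
  shows "(canonically_compactifiable b c \<longleftrightarrow> (SUP x. SUP y. rho b c x y) < \<infinity>)
       \<and> (canonically_compactifiable b c \<longleftrightarrow> (SUP x. SUP y. res b c x y) < \<infinity>)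
       \<and> (c = (\<lambda>_. 0) \<longrightarrow>
            (canonically_compactifiable b c \<longleftrightarrow>
              (\<forall>\<sigma> m. pseudometric \<sigma> \<and> is_measure m \<and> total_mass m < \<infinity> \<and> intrinsic b \<sigma> m
                 \<longrightarrow> (\<exists>C. \<forall>x y. \<sigma> x y \<le> C))))"
proof (intro conjI impI)
  show "canonically_compactifiable b c \<longleftrightarrow> (SUP x. SUP y. rho b c x y) < \<infinity>"
    using P1[OF assms(3)] P2[OF assms(3,4)] by blast
  show "canonically_compactifiable b c \<longleftrightarrow> (SUP x. SUP y. res b c x y) < \<infinity>"
    using P4[OF assms(3)] P3[OF assms(3) P2[OF assms(3,4)]] by blast
  assume c0: "c = (\<lambda>_. 0)"
  show "canonically_compactifiable b c \<longleftrightarrow>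
              (\<forall>\<sigma> m. pseudometric \<sigma> \<and> is_measure m \<and> total_mass m < \<infinity> \<and> intrinsic b \<sigma> m
                 \<longrightarrow> (\<exists>C. \<forall>x y. \<sigma> x y \<le> C))"
    using P5[OF assms(3) c0] P6[OF assms(3) c0] by blast
qed

end
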